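(* Let $r\geq 2$ and let $G$ be a $K_{r+1}$-free graph with $n$ vertices and $m\geq 1$ edges. Then \[ \lambda_n(G)\geq \frac{2mn}{(r-1)(n^2-2m)}, \] with equality if and only if $G$ is a regular complete $r$-partite graph, i.e. a complete $r$-partite graph all of whose $r$ parts have size $n/r$.
   Context: All graphs are finite, simple and undirected. For a graph $G$ of order $n$, $A(G)$ is its adjacency matrix, $D(G)$ the diagonal matrix of its vertex degrees, and $L(G)=D(G)-A(G)$ its Laplacian; the eigenvalues of $L(G)$ are $0=\lambda_1(G)\leq\dots\leq\lambda_n(G)$, so $\lambda_n(G)$ is the largest Laplacian eigenvalue. $K_{r+1}$ denotes the complete graph on $r+1$ vertices; $G$ is $K_{r+1}$-free if it contains no subgraph isomorphic to $K_{r+1}$. *)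

theory Defs
  imports "HOL-Analysis.Analysis"
begin

definition simple_graph :: "('n \<Rightarrow> 'n \<Rightarrow> bool) \<Rightarrow> bool" where
  "simple_graph E \<longleftrightarrow> (\<forall>u v. E u v \<longrightarrow> E v u) \<and> (\<forall>u. \<not> E u u)"

definition edges :: "('n \<Rightarrow> 'n \<Rightarrow> bool) \<Rightarrow> 'n set set" where
  "edges E = {{u, v} | u v. E u v}"

definition degree :: "('n::finite \<Rightarrow> 'n \<Rightarrow> bool) \<Rightarrow> 'n \<Rightarrow> nat" where
  "degree E u = card {v. E u v}"

definition adjacency_matrix :: "('n::finite \<Rightarrow> 'n \<Rightarrow> bool) \<Rightarrow> real^'n^'n" where
  "adjacency_matrix E = (\<chi> i j. if E i j then 1 else 0)"

definition degree_matrix :: "('n::finite \<Rightarrow> 'n \<Rightarrow> bool) \<Rightarrow> real^'n^'n" where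
  "degree_matrix E = (\<chi> i j. if i = j then real (degree E i) else 0)"

definition laplacian :: "('n::finite \<Rightarrow> 'n \<Rightarrow> bool) \<Rightarrow> real^'n^'n" where
  "laplacian E = degree_matrix E - adjacency_matrix E"

definition is_eigenvalue :: "real^'n^'n \<Rightarrow> real \<Rightarrow> bool" where
  "is_eigenvalue A mu \<longleftrightarrow> (\<exists>x. x \<noteq> 0 \<and> A *v x = mu *\<^sub>R x)"

definition lap_largest_eig :: "('n::finite \<Rightarrow> 'n \<Rightarrow> bool) \<Rightarrow> real" where
  "lap_largest_eig E = Max {mu. is_eigenvalue (laplacian E) mu}"

definition contains_clique :: "('n \<Rightarrow> 'n \<Rightarrow> bool) \<Rightarrow> nat \<Rightarrow> bool" where
  "contains_clique E k \<longleftrightarrow> (\<exists>S. finite S \<and> card S = k \<and> (\<forall>u\<in>S. \<forall>v\<in>S. u \<noteq> v \<longrightarrow> E u v))"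

definition regular_complete_multipartite :: "('n::finite \<Rightarrow> 'n \<Rightarrow> bool) \<Rightarrow> nat \<Rightarrow> bool" where
  "regular_complete_multipartite E r \<longleftrightarrow>
     (\<exists>f :: 'n \<Rightarrow> nat. (\<forall>v. f v < r) \<and>
        (\<forall>u v. E u v \<longleftrightarrow> f u \<noteq> f v) \<and>
        (\<forall>i<r. real (card {v. f v = i}) = real CARD('n) / real r))"

end

theory Submission
  imports Defs
begin

lemma mv_add: "(A::real^'n^'m) *v (x + y) = A *v x + A *v y"
  by (simp add: matrix_vector_mult_def vec_eq_iff sum.distrib algebra_simps)
lemma mv_scale: "(A::real^'n^'m) *v (c *\<^sub>R x) = c *\<^sub>R (A *v x)"
  by (simp add: matrix_vector_mult_def vec_eq_iff sum_distrib_left algebra_simps)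

lemma sym_form:
  fixes A :: "real^'n^'n"
  assumes "\<And>i j. A$i$j = A$j$i"
  shows "x \<bullet> (A *v y) = y \<bullet> (A *v x)"
proof -
  have "x \<bullet> (A *v y) = (\<Sum>i\<in>UNIV. \<Sum>j\<in>UNIV. x$i * A$i$j * y$j)"
    by (simp add: inner_vec_def matrix_vector_mult_def sum_distrib_left algebra_simps)
  also have "\<dots> = (\<Sum>j\<in>UNIV. \<Sum>i\<in>UNIV. x$i * A$i$j * y$j)" by (rule sum.swap)
  also have "\<dots> = y \<bullet> (A *v x)"
    by (simp add: inner_vec_def matrix_vector_mult_def sum_distrib_left algebra_simps assms)
  finally show ?thesis .
qed

lemma psd_zero:
  fixes A :: "real^'n^'n"
  assumes sym: "\<And>i j. A$i$j = A$j$i"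
    and psd: "\<And>x. x \<bullet> (A *v x) \<ge> 0"
    and z: "x0 \<bullet> (A *v x0) = 0"
  shows "A *v x0 = 0"
proof (rule ccontr)
  assume ne: "A *v x0 \<noteq> 0"
  define y where "y = A *v x0"
  define c where "c = y \<bullet> (A *v y)"
  have c0: "c \<ge> 0" using psd c_def by auto
  have yy: "y \<bullet> y > 0" using ne y_def by simp
  define t where "t = (y \<bullet> y) / (c + 1)"
  have t0: "t > 0" using yy c0 t_def by simp
  have "(x0 - t *\<^sub>R y) \<bullet> (A *v (x0 - t *\<^sub>R y)) = x0 \<bullet> (A *v x0) - 2 * t * (y \<bullet> y) + t^2 * c"
  proof -
    have e: "A *v (x0 - t *\<^sub>R y) = A *v x0 - t *\<^sub>R (A *v y)"
      using mv_add[of A x0 "(-t) *\<^sub>R y"] mv_scale[of A "-t" y] by simp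
    have s: "y \<bullet> (A *v x0) = x0 \<bullet> (A *v y)" using sym_form[OF sym] by metis
    show ?thesis unfolding e using s
      by (simp add: inner_diff_left inner_diff_right y_def c_def power2_eq_square algebra_simps inner_commute)
  qed
  also have "\<dots> = t * (t * c - 2 * (y \<bullet> y))" using z by (simp add: power2_eq_square algebra_simps)
  also have "\<dots> < 0"
  proof -
    have "t * c < t * (c + 1)" using t0 by simp
    also have "\<dots> = y \<bullet> y" using t_def c0 by simp
    finally have "t * c - 2 * (y \<bullet> y) < 0" using yy by linarith
    then show ?thesis using t0 by (simp add: mult_pos_neg)
  qed
  finally show False using psd by (meson not_le)
qed

lemma rayleigh:
  fixes A :: "real^'n^'n"
  assumes sym: "\<And>i j. A$i$j = A$j$i"
  defines "S \<equiv> {mu. is_eigenvalue A mu}"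
  shows "finite S" "Max S \<in> S" "\<And>x. x \<bullet> (A *v x) \<le> Max S * (x \<bullet> x)"
    "\<And>x. x \<bullet> (A *v x) = Max S * (x \<bullet> x) \<Longrightarrow> A *v x = Max S *\<^sub>R x"
proof -
  define f where "f x = x \<bullet> (A *v x)" for x :: "real^'n"
  have cont: "continuous_on (sphere 0 1) f"
    unfolding f_def by (intro continuous_intros continuous_on_id linear_continuous_on) (auto intro: bounded_linear_intros)
  obtain x0 where x0: "x0 \<in> sphere 0 1" and mx: "\<And>y. y \<in> sphere 0 1 \<Longrightarrow> f y \<le> f x0"
  proof -
    have "sphere (0::real^'n) 1 \<noteq> {}" by (simp add: sphere_eq_empty)
    then show ?thesis using continuous_attains_sup[OF compact_sphere _ cont] that by blast
  qed
  define R where "R = f x0"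
  have bound: "x \<bullet> (A *v x) \<le> R * (x \<bullet> x)" for x
  proof (cases "x = 0")
    case True then show ?thesis by simp
  next
    case False
    define y where "y = (1 / norm x) *\<^sub>R x"
    have "y \<in> sphere 0 1" using False y_def by simp
    then have "f y \<le> R" using mx R_def by simp
    moreover have "f y = (x \<bullet> (A *v x)) / (x \<bullet> x)"
      using False unfolding f_def y_def mv_scale by (simp add: power2_norm_eq_inner[symmetric] power2_eq_square)
    moreover have "x \<bullet> x > 0" using False by simp
    ultimately show ?thesis by (simp add: divide_le_eq)
  qed
  define M where "M = (\<chi> i j. (if i = j then R else 0) - A$i$j)"
  have Mv: "M *v x = R *\<^sub>R x - A *v x" for x
  proof -
    have "(\<Sum>j\<in>UNIV. (if i = j then R else 0) * x$j) = R * x$i" for i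
      by (simp add: if_distrib[of "\<lambda>a. a * _"] cong: if_cong)
    then show ?thesis
      by (simp add: M_def matrix_vector_mult_def vec_eq_iff sum_subtractf left_diff_distrib)
  qed
  have Msym: "M$i$j = M$j$i" for i j using sym by (simp add: M_def)
  have Mpsd: "x \<bullet> (M *v x) \<ge> 0" for x using bound[of x] by (simp add: Mv inner_diff_right)
  have eqv: "A *v x = R *\<^sub>R x" if "x \<bullet> (A *v x) = R * (x \<bullet> x)" for x
  proof -
    have "x \<bullet> (M *v x) = 0" using that by (simp add: Mv inner_diff_right)
    then have "M *v x = 0" using psd_zero[OF Msym Mpsd] by blast
    then show ?thesis by (simp add: Mv)
  qed
  have x0ne: "x0 \<noteq> 0" using x0 by auto
  have "x0 \<bullet> x0 = 1" using x0 by (simp add: dot_square_norm)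
  then have "A *v x0 = R *\<^sub>R x0" using eqv R_def f_def by simp
  then have RS: "R \<in> S" using x0ne by (auto simp: S_def is_eigenvalue_def)
  have le: "mu \<le> R" if mS: "mu \<in> S" for mu
  proof -
    obtain x where x: "x \<noteq> 0" "A *v x = mu *\<^sub>R x" using mS by (auto simp: S_def is_eigenvalue_def)
    have "mu * (x \<bullet> x) \<le> R * (x \<bullet> x)" using bound[of x] x by simp
    then show ?thesis using x by simp
  qed
  define ev where "ev mu = (SOME x. x \<noteq> 0 \<and> A *v x = mu *\<^sub>R x)" for mu
  have evp: "ev mu \<noteq> 0 \<and> A *v ev mu = mu *\<^sub>R ev mu" if "mu \<in> S" for mu
    using that unfolding ev_def S_def is_eigenvalue_def by (metis (mono_tags, lifting) mem_Collect_eq someI_ex)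
  have orth: "ev mu \<bullet> ev nu = 0" if "mu \<in> S" "nu \<in> S" "mu \<noteq> nu" for mu nu
  proof -
    have "mu * (ev mu \<bullet> ev nu) = (A *v ev mu) \<bullet> ev nu" using evp[OF that(1)] by simp
    also have "\<dots> = ev mu \<bullet> (A *v ev nu)" using sym_form[OF sym] by (metis inner_commute)
    also have "\<dots> = nu * (ev mu \<bullet> ev nu)" using evp[OF that(2)] by simp
    finally show ?thesis using that(3) by simp
  qed
  have inj: "inj_on ev S"
  proof
    fix mu nu assume a: "mu \<in> S" "nu \<in> S" "ev mu = ev nu"
    show "mu = nu"
    proof (rule ccontr)
      assume "mu \<noteq> nu"
      then have "ev mu \<bullet> ev mu = 0" using orth a by metis
      then show False using evp a by simp
    qed
  qed
  have "independent (ev ` S)"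
    apply (rule pairwise_orthogonal_independent)
    using orth evp unfolding pairwise_def orthogonal_def by auto
  then have "finite (ev ` S)" by (rule finiteI_independent)
  then show fin: "finite S" using inj finite_imageD by blast
  have MR: "Max S = R" by (rule Max_eqI[OF fin le RS])
  show "Max S \<in> S" using MR RS by simp
  show "\<And>x. x \<bullet> (A *v x) \<le> Max S * (x \<bullet> x)" using bound MR by simp
  show "\<And>x. x \<bullet> (A *v x) = Max S * (x \<bullet> x) \<Longrightarrow> A *v x = Max S *\<^sub>R x" using eqv MR by simp
qed

definition ind :: "('n \<Rightarrow> 'n \<Rightarrow> bool) \<Rightarrow> 'n \<Rightarrow> 'n \<Rightarrow> real" where
  "ind E u v = (if E u v then 1 else 0)"

definition clq :: "('n \<Rightarrow> 'n \<Rightarrow> bool) \<Rightarrow> 'n set \<Rightarrow> bool" where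
  "clq E S \<longleftrightarrow> (\<forall>u\<in>S. \<forall>v\<in>S. u \<noteq> v \<longrightarrow> E u v)"

lemma ind_sq[simp]: "ind E u v * ind E u v = ind E u v" by (simp add: ind_def)
lemma ind_ge0[simp]: "ind E u v \<ge> 0" by (simp add: ind_def)
lemma ind_le1[simp]: "ind E u v \<le> 1" by (simp add: ind_def)

lemma sum_ind: "finite W \<Longrightarrow> (\<Sum>v\<in>W. ind E u v * f v) = (\<Sum>v\<in>{v\<in>W. E u v}. f v)"
  by (simp add: sum.inter_filter ind_def) (rule sum.cong, auto)

lemma deg_sum: "real (degree E u) = (\<Sum>v\<in>UNIV. ind E u v)"
  using sum_ind[of UNIV E u "\<lambda>_. 1"] by (simp add: degree_def)

lemma lap_entry: "laplacian E $ i $ j = (if i = j then real (degree E i) else 0) - ind E i j"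
  by (simp add: laplacian_def degree_matrix_def adjacency_matrix_def ind_def)

lemma lap_sym: "simple_graph E \<Longrightarrow> laplacian E $ i $ j = laplacian E $ j $ i"
  by (auto simp: lap_entry ind_def simple_graph_def)

lemma lap_mv: "(laplacian E *v x) $ w = (\<Sum>v\<in>UNIV. ind E w v * (x$w - x$v))"
proof -
  have "(laplacian E *v x) $ w = (\<Sum>v\<in>UNIV. (if w = v then real (degree E w) else 0) * x$v) - (\<Sum>v\<in>UNIV. ind E w v * x$v)"
    by (simp add: matrix_vector_mult_def lap_entry left_diff_distrib sum_subtractf)
  also have "(\<Sum>v\<in>UNIV. (if w = v then real (degree E w) else 0) * x$v) = real (degree E w) * x$w"
    by (simp add: if_distrib[of "\<lambda>a. a * _"] cong: if_cong)
  also have "real (degree E w) * x$w = (\<Sum>v\<in>UNIV. ind E w v * x$w)"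
    by (simp add: deg_sum sum_distrib_right)
  finally show ?thesis by (simp add: right_diff_distrib sum_subtractf)
qed

lemma ind_sym: "simple_graph E \<Longrightarrow> ind E u v = ind E v u"
  by (auto simp: ind_def simple_graph_def)

lemma lap_qf:
  assumes sg: "simple_graph E"
  shows "x \<bullet> (laplacian E *v x) = (\<Sum>u\<in>UNIV. \<Sum>v\<in>UNIV. ind E u v * (x$u - x$v)^2) / 2"
proof -
  have a: "x \<bullet> (laplacian E *v x) = (\<Sum>u\<in>UNIV. \<Sum>v\<in>UNIV. ind E u v * (x$u * (x$u - x$v)))"
    by (simp add: inner_vec_def lap_mv sum_distrib_left algebra_simps)
  have "(\<Sum>u\<in>UNIV. \<Sum>v\<in>UNIV. ind E u v * (x$u * (x$u - x$v))) = (\<Sum>v\<in>UNIV. \<Sum>u\<in>UNIV. ind E u v * (x$u * (x$u - x$v)))"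
    by (rule sum.swap)
  also have "\<dots> = (\<Sum>u\<in>UNIV. \<Sum>v\<in>UNIV. ind E u v * (x$v * (x$v - x$u)))"
    by (intro sum.cong refl) (metis ind_sym[OF sg])
  finally have b: "(\<Sum>u\<in>UNIV. \<Sum>v\<in>UNIV. ind E u v * (x$u * (x$u - x$v))) = (\<Sum>u\<in>UNIV. \<Sum>v\<in>UNIV. ind E u v * (x$v * (x$v - x$u)))" .
  have "2 * (x \<bullet> (laplacian E *v x)) = (\<Sum>u\<in>UNIV. \<Sum>v\<in>UNIV. ind E u v * (x$u * (x$u - x$v))) + (\<Sum>u\<in>UNIV. \<Sum>v\<in>UNIV. ind E u v * (x$v * (x$v - x$u)))"
    using a b by simp
  also have "\<dots> = (\<Sum>u\<in>UNIV. \<Sum>v\<in>UNIV. ind E u v * (x$u - x$v)^2)"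
    by (simp only: sum.distrib[symmetric]) (intro sum.cong refl, simp add: power2_eq_square algebra_simps)
  finally show ?thesis by simp
qed

lemma lam_props:
  assumes sg: "simple_graph E"
  shows "\<And>x. x \<bullet> (laplacian E *v x) \<le> lap_largest_eig E * (x \<bullet> x)"
    "\<And>x. x \<bullet> (laplacian E *v x) = lap_largest_eig E * (x \<bullet> x) \<Longrightarrow> laplacian E *v x = lap_largest_eig E *\<^sub>R x"
    "is_eigenvalue (laplacian E) (lap_largest_eig E)"
  using rayleigh[of "laplacian E", OF lap_sym[OF sg]] unfolding lap_largest_eig_def by auto

lemma lam_le_n:
  fixes E :: "'n::finite \<Rightarrow> 'n \<Rightarrow> bool"
  assumes sg: "simple_graph E"
  shows "lap_largest_eig E \<le> real CARD('n)"
proof -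
  obtain x where x: "x \<noteq> 0" "laplacian E *v x = lap_largest_eig E *\<^sub>R x"
    using lam_props(3)[OF sg] unfolding is_eigenvalue_def by blast
  have "lap_largest_eig E * (x \<bullet> x) = x \<bullet> (laplacian E *v x)" using x by simp
  also have "\<dots> \<le> (\<Sum>u\<in>UNIV. \<Sum>v\<in>UNIV. (x$u - x$v)^2) / 2"
    unfolding lap_qf[OF sg]
    by (intro divide_right_mono sum_mono mult_left_le_one_le) auto
  also have "(\<Sum>u\<in>UNIV. \<Sum>v\<in>UNIV. (x$u - x$v)^2) = 2 * (real CARD('n) * (x \<bullet> x)) - 2 * (\<Sum>u\<in>UNIV. x$u)^2"
  proof -
    have "(\<Sum>u\<in>UNIV. \<Sum>v\<in>UNIV. (x$u - x$v)^2) = (\<Sum>u\<in>UNIV. \<Sum>v\<in>UNIV. (x$u * x$u + x$v * x$v - 2 * (x$u * x$v)))"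
      by (intro sum.cong refl) (simp add: power2_eq_square algebra_simps)
    also have "\<dots> = (\<Sum>u\<in>UNIV. \<Sum>v\<in>(UNIV::'n set). x$u * x$u) + (\<Sum>u\<in>(UNIV::'n set). \<Sum>v\<in>UNIV. x$v * x$v) - 2 * (\<Sum>u\<in>UNIV. \<Sum>v\<in>UNIV. x$u * x$v)"
      by (simp add: sum.distrib sum_subtractf sum_distrib_left)
    also have "(\<Sum>u\<in>UNIV. \<Sum>v\<in>(UNIV::'n set). x$u * x$u) = real CARD('n) * (x \<bullet> x)"
      by (simp add: inner_vec_def sum_distrib_left mult.commute)
    also have "(\<Sum>u\<in>(UNIV::'n set). \<Sum>v\<in>UNIV. x$v * x$v) = real CARD('n) * (x \<bullet> x)"
      by (simp add: inner_vec_def)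
    also have "(\<Sum>u\<in>UNIV. \<Sum>v\<in>UNIV. x$u * x$v) = (\<Sum>u\<in>UNIV. x$u)^2"
      by (simp add: power2_eq_square sum_product)
    finally show ?thesis by simp
  qed
  also have "(2 * (real CARD('n) * (x \<bullet> x)) - 2 * (\<Sum>u\<in>UNIV. x$u)^2) / 2 \<le> real CARD('n) * (x \<bullet> x)"
    by simp
  finally show ?thesis using x by simp
qed

lemma handshake:
  fixes E :: "'n::finite \<Rightarrow> 'n \<Rightarrow> bool"
  assumes sg: "simple_graph E"
  shows "(\<Sum>u\<in>UNIV. \<Sum>v\<in>UNIV. ind E u v) = 2 * real (card (edges E))"
proof -
  define P where "P = Sigma (UNIV::'n set) (\<lambda>u. {v. E u v})"
  have "(\<Sum>u\<in>UNIV. \<Sum>v\<in>UNIV. ind E u v) = (\<Sum>u\<in>UNIV. real (card {v. E u v}))"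
    using deg_sum[of E] by (simp add: degree_def)
  also have "\<dots> = real (card P)" unfolding P_def by (simp add: card_SigmaI)
  finally have 1: "(\<Sum>u\<in>UNIV. \<Sum>v\<in>UNIV. ind E u v) = real (card P)" .
  define F where "F e = {p\<in>P. {fst p, snd p} = e}" for e
  have PU: "P = \<Union> (F ` edges E)"
    by (auto simp: P_def F_def edges_def; blast)
  have fe: "finite (edges E)" by simp
  have disj: "\<forall>e\<in>edges E. \<forall>e'\<in>edges E. e \<noteq> e' \<longrightarrow> F e \<inter> F e' = {}"
    by (auto simp: F_def)
  have c2: "card (F e) = 2" if eE: "e \<in> edges E" for e
  proof -
    obtain u v where uv: "e = {u, v}" "E u v" using eE by (auto simp: edges_def)
    have ne: "u \<noteq> v" using uv sg by (auto simp: simple_graph_def)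
    have "F e = {(u,v),(v,u)}"
      using uv sg unfolding F_def P_def simple_graph_def by (auto simp: doubleton_eq_iff)
    then show ?thesis using ne by simp
  qed
  have "card P = (\<Sum>e\<in>edges E. card (F e))"
    unfolding PU by (rule card_UN_disjoint[OF fe]) (auto simp: disj)
  also have "\<dots> = 2 * card (edges E)" using c2 by simp
  finally show ?thesis using 1 by simp
qed

lemma turan_aux:
  fixes E :: "'n::finite \<Rightarrow> 'n \<Rightarrow> bool"
  assumes sg: "simple_graph E"
  shows "(\<Sum>a\<in>W. ind E u a * (\<Sum>b\<in>W. ind E a b)) - (\<Sum>a\<in>W. \<Sum>b\<in>W. ind E u a * ind E u b * ind E a b)
        \<le> (\<Sum>b\<in>W. ind E u b) * (real (card W) - (\<Sum>b\<in>W. ind E u b))"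
proof -
  have "(\<Sum>a\<in>W. ind E u a * (\<Sum>b\<in>W. ind E a b)) - (\<Sum>a\<in>W. \<Sum>b\<in>W. ind E u a * ind E u b * ind E a b)
      = (\<Sum>a\<in>W. \<Sum>b\<in>W. ind E u a * (ind E a b * (1 - ind E u b)))"
    by (simp add: sum_distrib_left sum_subtractf[symmetric] algebra_simps)
  also have "\<dots> \<le> (\<Sum>a\<in>W. \<Sum>b\<in>W. ind E u a * (1 - ind E u b))"
    by (intro sum_mono mult_left_mono mult_left_le_one_le) auto
  also have "\<dots> = (\<Sum>b\<in>W. ind E u b) * (real (card W) - (\<Sum>b\<in>W. ind E u b))"
    by (simp add: sum_distrib_left sum_distrib_right sum_subtractf algebra_simps)
  finally show ?thesis .
qed

lemma sum_deg_sq: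
  fixes E :: "'n::finite \<Rightarrow> 'n \<Rightarrow> bool"
  assumes sg: "simple_graph E"
  shows "(\<Sum>u\<in>W. \<Sum>a\<in>W. ind E u a * (\<Sum>b\<in>W. ind E a b)) = (\<Sum>a\<in>W. (\<Sum>b\<in>W. ind E a b)^2)"
proof -
  have "(\<Sum>u\<in>W. \<Sum>a\<in>W. ind E u a * (\<Sum>b\<in>W. ind E a b)) = (\<Sum>a\<in>W. \<Sum>u\<in>W. ind E u a * (\<Sum>b\<in>W. ind E a b))"
    by (rule sum.swap)
  also have "\<dots> = (\<Sum>a\<in>W. (\<Sum>u\<in>W. ind E a u) * (\<Sum>b\<in>W. ind E a b))"
    by (intro sum.cong refl) (simp add: sum_distrib_right, intro sum.cong refl, metis ind_sym[OF sg])
  finally show ?thesis by (simp add: power2_eq_square)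
qed

lemma cauchy_card:
  fixes f :: "'a \<Rightarrow> real"
  shows "(\<Sum>a\<in>W. f a)^2 \<le> real (card W) * (\<Sum>a\<in>W. (f a)^2)"
  using Cauchy_Schwarz_ineq_sum[of "\<lambda>_. 1" f W] by (simp add: mult.commute)

lemma sub_T:
  fixes E :: "'n::finite \<Rightarrow> 'n \<Rightarrow> bool"
  shows "(\<Sum>a\<in>{v\<in>W. E u v}. \<Sum>b\<in>{v\<in>W. E u v}. ind E a b) = (\<Sum>a\<in>W. \<Sum>b\<in>W. ind E u a * ind E u b * ind E a b)"
proof -
  have "(\<Sum>a\<in>W. \<Sum>b\<in>W. ind E u a * ind E u b * ind E a b) = (\<Sum>a\<in>W. ind E u a * (\<Sum>b\<in>W. ind E u b * ind E a b))"
    by (simp add: sum_distrib_left algebra_simps)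
  also have "\<dots> = (\<Sum>a\<in>{v\<in>W. E u v}. \<Sum>b\<in>{v\<in>W. E u v}. ind E a b)"
    by (simp add: sum_ind)
  finally show ?thesis by simp
qed

lemma card_sub: "real (card {v\<in>W. E u v}) = (\<Sum>b\<in>(W::'n::finite set). ind E u b)"
  using sum_ind[of W E u "\<lambda>_. 1"] by simp

lemma turan:
  fixes E :: "'n::finite \<Rightarrow> 'n \<Rightarrow> bool"
  assumes sg: "simple_graph E"
  shows "\<And>W. (\<forall>S\<subseteq>W. card S = Suc k + 1 \<longrightarrow> \<not> clq E S) \<Longrightarrow>
    real (Suc k) * (\<Sum>a\<in>W. \<Sum>b\<in>W. ind E a b) \<le> real k * real (card W)^2"
proof (induction k)
  case 0
  fix W :: "'n set"
  assume a: "\<forall>S\<subseteq>W. card S = Suc 0 + 1 \<longrightarrow> \<not> clq E S"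
  have "ind E x y = 0" if xy: "x \<in> W" "y \<in> W" for x y
  proof (rule ccontr)
    assume "ind E x y \<noteq> 0"
    then have e: "E x y" by (simp add: ind_def split: if_splits)
    then have "x \<noteq> y" using sg by (auto simp: simple_graph_def)
    then have "card {x, y} = Suc 0 + 1" by simp
    moreover have "clq E {x,y}" using e sg unfolding clq_def simple_graph_def by auto
    moreover have "{x,y} \<subseteq> W" using xy by simp
    ultimately show False using a[rule_format, of "{x,y}"] by simp
  qed
  then show "real (Suc 0) * (\<Sum>a\<in>W. \<Sum>b\<in>W. ind E a b) \<le> real 0 * real (card W)^2" by simp
next
  case (Suc k)
  fix W :: "'n set"
  assume a: "\<forall>S\<subseteq>W. card S = Suc (Suc k) + 1 \<longrightarrow> \<not> clq E S"
  define d where "d a = (\<Sum>b\<in>W. ind E a b)" for a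
  define T where "T u = (\<Sum>a\<in>W. \<Sum>b\<in>W. ind E u a * ind E u b * ind E a b)" for u
  define N where "N = real (card W)"
  define D where "D = (\<Sum>a\<in>W. d a)"
  define Q where "Q = (\<Sum>a\<in>W. (d a)^2)"
  have IHu: "real (Suc k) * T u \<le> real k * (d u)^2" if uW: "u \<in> W" for u
  proof -
    have "\<forall>S\<subseteq>{v\<in>W. E u v}. card S = Suc k + 1 \<longrightarrow> \<not> clq E S"
    proof (intro allI impI notI)
      fix S assume S: "S \<subseteq> {v\<in>W. E u v}" "card S = Suc k + 1" "clq E S"
      have uS: "u \<notin> S" using S(1) sg by (auto simp: simple_graph_def)
      have fS: "finite S" by simp
      have "card (insert u S) = Suc (Suc k) + 1" using uS fS S(2) by simp
      moreover have "insert u S \<subseteq> W" using S(1) uW by auto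
      moreover have "clq E (insert u S)" using S(1,3) sg unfolding clq_def simple_graph_def by auto
      ultimately show False using a[rule_format, of "insert u S"] S(3) by simp
    qed
    from Suc.IH[OF this] show ?thesis
      unfolding sub_T card_sub T_def d_def .
  qed
  have loc: "(\<Sum>a\<in>W. ind E u a * d a) - T u \<le> d u * (N - d u)" for u
    unfolding d_def T_def N_def by (rule turan_aux[OF sg])
  have "(\<Sum>u\<in>W. (\<Sum>a\<in>W. ind E u a * d a) - T u) \<le> (\<Sum>u\<in>W. d u * (N - d u))"
    by (rule sum_mono) (rule loc)
  moreover have "(\<Sum>u\<in>W. \<Sum>a\<in>W. ind E u a * d a) = Q"
    unfolding d_def Q_def by (rule sum_deg_sq[OF sg])
  moreover have "(\<Sum>u\<in>W. d u * (N - d u)) = D*N - Q"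
    by (simp add: D_def Q_def right_diff_distrib sum_subtractf sum_distrib_right power2_eq_square)
  ultimately have s1: "Q - (\<Sum>u\<in>W. T u) \<le> D * N - Q"
    by (simp add: sum_subtractf)
  have s2: "real (Suc k) * (\<Sum>u\<in>W. T u) \<le> real k * Q"
    unfolding Q_def sum_distrib_left using IHu by (intro sum_mono) auto
  have s3: "real (Suc (Suc k)) * Q \<le> real (Suc k) * D * N"
  proof -
    have "real (Suc k) * (Q - (\<Sum>u\<in>W. T u)) \<le> real (Suc k) * (D * N - Q)"
      using s1 by (intro mult_left_mono) auto
    then show ?thesis using s2 by (simp add: algebra_simps)
  qed
  have cs: "D^2 \<le> N * Q" unfolding D_def N_def Q_def by (rule cauchy_card)
  have D0: "D \<ge> 0" unfolding D_def d_def by (intro sum_nonneg) auto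
  have N0: "N \<ge> 0" unfolding N_def by simp
  have "real (Suc (Suc k)) * D * D \<le> real (Suc k) * D * N * N"
  proof -
    have "real (Suc (Suc k)) * D^2 \<le> real (Suc (Suc k)) * (N * Q)"
      using cs by (intro mult_left_mono) auto
    also have "\<dots> = N * (real (Suc (Suc k)) * Q)" by simp
    also have "\<dots> \<le> N * (real (Suc k) * D * N)" using s3 N0 by (intro mult_left_mono) auto
    finally show ?thesis by (simp add: power2_eq_square algebra_simps)
  qed
  then have "real (Suc (Suc k)) * D \<le> real (Suc k) * N * N"
  proof (cases "D = 0")
    case False
    then have "D > 0" using D0 by simp
    then show ?thesis using \<open>real (Suc (Suc k)) * D * D \<le> real (Suc k) * D * N * N\<close>
    proof -
      have "D * (real (Suc (Suc k)) * D) \<le> D * (real (Suc k) * N * N)"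
        using \<open>real (Suc (Suc k)) * D * D \<le> real (Suc k) * D * N * N\<close> by (simp add: algebra_simps)
      then show ?thesis using \<open>D > 0\<close> mult_le_cancel_left_pos by blast
    qed
  qed (simp add: N0)
  then show "real (Suc (Suc k)) * (\<Sum>a\<in>W. \<Sum>b\<in>W. ind E a b) \<le> real (Suc k) * real (card W)^2"
    unfolding D_def d_def N_def by (simp add: power2_eq_square)
qed

definition dg :: "('n::finite \<Rightarrow> 'n \<Rightarrow> bool) \<Rightarrow> 'n \<Rightarrow> real" where
  "dg E u = (\<Sum>v\<in>UNIV. ind E u v)"

definition xv :: "('n::finite \<Rightarrow> 'n \<Rightarrow> bool) \<Rightarrow> 'n \<Rightarrow> real^'n" where
  "xv E u = (\<chi> w. ind E u w - dg E u / real CARD('n))"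

definition TT :: "('n::finite \<Rightarrow> 'n \<Rightarrow> bool) \<Rightarrow> 'n \<Rightarrow> real" where
  "TT E u = (\<Sum>a\<in>UNIV. \<Sum>b\<in>UNIV. ind E u a * ind E u b * ind E a b)"

lemma xv_norm:
  fixes E :: "'n::finite \<Rightarrow> 'n \<Rightarrow> bool"
  shows "xv E u \<bullet> xv E u = dg E u - (dg E u)^2 / real CARD('n::finite)"
proof -
  define c where "c = dg E u / real CARD('n)"
  have "xv E u \<bullet> xv E u = (\<Sum>w\<in>UNIV. ind E u w - 2 * c * ind E u w + c * c)"
    unfolding inner_vec_def
  proof (intro sum.cong refl)
    fix w
    have "xv E u $ w = ind E u w - c" by (simp add: xv_def c_def)
    then show "xv E u $ w \<bullet> xv E u $ w = ind E u w - 2 * c * ind E u w + c * c"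
      unfolding \<open>xv E u $ w = ind E u w - c\<close> by (simp add: algebra_simps)
  qed
  also have "\<dots> = dg E u - 2 * c * dg E u + real CARD('n) * c * c"
    by (simp add: sum.distrib sum_subtractf sum_distrib_left dg_def)
  also have "\<dots> = dg E u - (dg E u)^2 / real CARD('n)"
    by (simp add: c_def power2_eq_square field_simps)
  finally show ?thesis .
qed

lemma lap_xv: "(laplacian E *v xv E u) $ w = ind E u w * dg E w - (\<Sum>v\<in>UNIV. ind E w v * ind E u v)"
  unfolding lap_mv xv_def dg_def
  by (simp add: algebra_simps sum_subtractf sum_distrib_left)

lemma qf_xv:
  fixes E :: "'n::finite \<Rightarrow> 'n \<Rightarrow> bool"
  assumes sg: "simple_graph E"
  shows "xv E u \<bullet> (laplacian E *v xv E u) = (\<Sum>a\<in>UNIV. ind E u a * dg E a) - TT E u"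
proof -
  define c where "c = dg E u / real CARD('n)"
  have "xv E u \<bullet> (laplacian E *v xv E u) =
      (\<Sum>w\<in>UNIV. ind E u w * (ind E u w * dg E w - (\<Sum>v\<in>UNIV. ind E w v * ind E u v)))
      - c * ((\<Sum>w\<in>UNIV. ind E u w * dg E w) - (\<Sum>w\<in>UNIV. \<Sum>v\<in>UNIV. ind E w v * ind E u v))"
  proof -
    have xe: "xv E u $ w = ind E u w - c" for w by (simp add: xv_def c_def)
    show ?thesis unfolding inner_vec_def lap_xv xe
      by (simp add: left_diff_distrib right_diff_distrib sum_subtractf sum_distrib_left)
  qed
  also have "(\<Sum>w\<in>UNIV. \<Sum>v\<in>UNIV. ind E w v * ind E u v) = (\<Sum>w\<in>UNIV. ind E u w * dg E w)"
  proof -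
    have "(\<Sum>w\<in>UNIV. \<Sum>v\<in>UNIV. ind E w v * ind E u v) = (\<Sum>v\<in>UNIV. \<Sum>w\<in>UNIV. ind E w v * ind E u v)"
      by (rule sum.swap)
    also have "\<dots> = (\<Sum>v\<in>UNIV. ind E u v * dg E v)"
      unfolding dg_def sum_distrib_left
      by (intro sum.cong refl) (simp add: mult.commute ind_sym[OF sg, of v for v])
    finally show ?thesis .
  qed
  also have "(\<Sum>w\<in>UNIV. ind E u w * (ind E u w * dg E w - (\<Sum>v\<in>UNIV. ind E w v * ind E u v)))
      = (\<Sum>a\<in>UNIV. ind E u a * dg E a) - TT E u"
  proof -
    have 1: "(\<Sum>w\<in>UNIV. ind E u w * (ind E u w * dg E w)) = (\<Sum>a\<in>UNIV. ind E u a * dg E a)"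
      by (simp add: mult.assoc[symmetric])
    have 2: "(\<Sum>w\<in>UNIV. ind E u w * (\<Sum>v\<in>UNIV. ind E w v * ind E u v)) = TT E u"
      unfolding TT_def sum_distrib_left by (intro sum.cong refl) (simp add: mult_ac)
    show ?thesis unfolding right_diff_distrib sum_subtractf 1 2 ..
  qed
  finally show ?thesis by simp
qed

lemma dg_le:
  fixes E :: "'n::finite \<Rightarrow> 'n \<Rightarrow> bool"
  assumes sg: "simple_graph E"
  shows "dg E u \<le> real CARD('n) - 1"
proof -
  have "{v. E u v} \<subseteq> UNIV - {u}" using sg by (auto simp: simple_graph_def)
  then have "card {v. E u v} \<le> card (UNIV - {u})" by (intro card_mono) auto
  also have "\<dots> = CARD('n) - 1" by (simp add: card_Diff_subset)
  finally have cc: "card {v. E u v} \<le> CARD('n) - 1" .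
  have "real (card {v. E u v}) \<le> real CARD('n) - 1"
  proof -
    have "CARD('n) \<ge> 1" by (simp add: Suc_leI)
    then have "real (CARD('n) - 1) = real CARD('n) - 1" by (simp add: of_nat_diff)
    moreover have "real (card {v. E u v}) \<le> real (CARD('n) - 1)" using cc by (simp only: of_nat_le_iff)
    ultimately show ?thesis by simp
  qed
  then show ?thesis using deg_sum[of E u] by (simp add: dg_def degree_def)
qed

lemma card_compl_real:
  "real (card {w::'n::finite. \<not> P w}) = real CARD('n) - real (card {w. P w})"
proof -
  have "card {w. P w} + card {w. \<not> P w} = card ({w. P w} \<union> {w. \<not> P w})"
    by (rule card_Un_disjoint[symmetric]) auto
  also have "{w. P w} \<union> {w. \<not> P w} = (UNIV::'n set)" by auto
  finally have "real (card {w. P w}) + real (card {w. \<not> P w}) = real CARD('n)"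
    by (metis of_nat_add)
  then show ?thesis by simp
qed

lemma build_f:
  fixes E :: "'n::finite \<Rightarrow> 'n \<Rightarrow> bool"
  assumes sg: "simple_graph E"
    and nb: "\<And>u w v. \<not> E u w \<Longrightarrow> E u v \<Longrightarrow> E w v"
    and cc: "\<And>u. real (card {w. \<not> E u w}) = real CARD('n) / real r"
    and r0: "r > 0"
  shows "regular_complete_multipartite E r"
proof -
  define C where "C u = {w. \<not> E u w}" for u
  have Eiff: "C u = C v \<longleftrightarrow> \<not> E u v" for u v
  proof
    assume "C u = C v"
    moreover have "u \<in> C u" using sg by (simp add: C_def simple_graph_def)
    ultimately have "\<not> E v u" by (simp add: C_def)
    then show "\<not> E u v" using sg by (auto simp: simple_graph_def)
  next
    assume a: "\<not> E u v"
    then have b: "\<not> E v u" using sg by (auto simp: simple_graph_def)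
    show "C u = C v"
      unfolding C_def using nb[OF a] nb[OF b] by auto
  qed
  define K where "K = range C"
  have fK: "finite K" by (simp add: K_def)
  have disj: "pairwise disjnt K"
  proof (rule pairwiseI)
    fix A B assume AB: "A \<in> K" "B \<in> K" "A \<noteq> B"
    then obtain u v where uv: "A = C u" "B = C v" by (auto simp: K_def)
    show "disjnt A B"
    proof (rule ccontr)
      assume "\<not> disjnt A B"
      then obtain w where wu: "w \<in> C u" and wv: "w \<in> C v" using uv by (auto simp: disjnt_def)
      have "C u = C w" using wu Eiff by (simp add: C_def)
      moreover have "C v = C w" using wv Eiff by (simp add: C_def)
      ultimately show False using AB uv by simp
    qed
  qed
  have UK: "\<Union>K = UNIV"
  proof -
    have "u \<in> C u" for u using sg by (simp add: C_def simple_graph_def)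
    then show ?thesis by (auto simp: K_def)
  qed
  have "real CARD('n) = real (sum card K)"
    using card_Union_disjoint[OF disj] UK by simp
  also have "\<dots> = (\<Sum>k\<in>K. real (card k))" by simp
  also have "\<dots> = (\<Sum>k\<in>K. real CARD('n) / real r)"
    by (intro sum.cong refl) (auto simp: K_def C_def cc)
  also have "\<dots> = real (card K) * real CARD('n) / real r" by simp
  finally have "real (card K) = real r" using r0 by (simp add: field_simps)
  then have cK: "card K = r" by simp
  obtain h where h: "bij_betw h K {0..<card K}" using ex_bij_betw_finite_nat[OF fK] by blast
  define f where "f v = h (C v)" for v
  show ?thesis unfolding regular_complete_multipartite_def
  proof (intro exI[of _ f] conjI allI impI)
    fix v show "f v < r" using h cK unfolding f_def bij_betw_def K_def by auto
  next
    fix u v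
    have "f u = f v \<longleftrightarrow> C u = C v"
      using h unfolding f_def bij_betw_def inj_on_def K_def by auto
    then show "E u v \<longleftrightarrow> f u \<noteq> f v" using Eiff by simp
  next
    fix i assume i: "i < r"
    then obtain k where k: "k \<in> K" "h k = i" using h cK unfolding bij_betw_def by (metis atLeastLessThan_iff imageE zero_le)
    then obtain u where u: "k = C u" by (auto simp: K_def)
    have "{v. f v = i} = {v. C v = C u}"
      using h k u unfolding f_def bij_betw_def inj_on_def K_def by auto
    also have "\<dots> = {v. \<not> E v u}" using Eiff by simp
    also have "\<dots> = C u" using sg unfolding C_def simple_graph_def by blast
    finally show "real (card {v. f v = i}) = real CARD('n) / real r" using cc by (simp add: C_def)
  qed
qed

lemma dg_card: "dg E u = real (card {v. E u v})"
  using deg_sum[of E u] by (simp add: dg_def degree_def)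

theorem theorem1:
  fixes E :: "'n::finite \<Rightarrow> 'n \<Rightarrow> bool" and r :: nat
  assumes "simple_graph E"
    and "r \<ge> 2"
    and "\<not> contains_clique E (r + 1)"
    and "card (edges E) \<ge> 1"
  shows "lap_largest_eig E \<ge>
           2 * real (card (edges E)) * real CARD('n) /
             ((real r - 1) * (real CARD('n) ^ 2 - 2 * real (card (edges E)))) \<and>
         (lap_largest_eig E =
           2 * real (card (edges E)) * real CARD('n) /
             ((real r - 1) * (real CARD('n) ^ 2 - 2 * real (card (edges E))))
         \<longleftrightarrow> regular_complete_multipartite E r)"
proof -
  note sg = assms(1)
  define n where "n = real CARD('n)"
  define m where "m = real (card (edges E))"
  define D where "D = (\<Sum>u\<in>UNIV. dg E u)"
  define Q where "Q = (\<Sum>u\<in>UNIV. (dg E u)^2)"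
  define R where "R = lap_largest_eig E"
  define ST where "ST = (\<Sum>u\<in>UNIV. TT E u)"
  define qf where "qf u = xv E u \<bullet> (laplacian E *v xv E u)" for u
  define nx where "nx u = xv E u \<bullet> xv E u" for u
  have r1: "real r - 1 > 0" using assms(2) by simp
  have D2m: "D = 2 * m"
    using handshake[OF sg] unfolding D_def m_def dg_def by simp
  have n0: "n > 0" unfolding n_def by simp
  have m1: "m \<ge> 1" using assms(4) unfolding m_def by simp
  have D0: "D > 0" using D2m m1 by simp
  have dg0: "dg E u \<ge> 0" for u unfolding dg_def by (intro sum_nonneg) auto
  have dgle: "dg E u \<le> n - 1" for u using dg_le[OF sg] unfolding n_def by simp
  have QD: "Q \<le> (n - 1) * D"
    unfolding Q_def D_def sum_distrib_left power2_eq_square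
    by (intro sum_mono) (metis dg0 dgle mult.commute mult_right_mono)
  have QnD: "Q < n * D" using QD D0 by (simp add: algebra_simps)
  have Dn: "D \<le> n * (n - 1)"
    unfolding D_def n_def using dgle[unfolded n_def] sum_mono[of UNIV "dg E" "\<lambda>_. real CARD('n) - 1"] by simp
  have Dn2: "D < n^2" using Dn n0 by (simp add: power2_eq_square algebra_simps)
  have cs: "D^2 \<le> n * Q" unfolding D_def n_def Q_def using cauchy_card[of "dg E" UNIV] by simp
  have ray: "qf u \<le> R * nx u" for u unfolding qf_def R_def nx_def by (rule lam_props(1)[OF sg])
  have tur: "(real r - 1) * TT E u \<le> (real r - 2) * (dg E u)^2" for u
  proof -
    have hyp: "\<forall>S\<subseteq>{v\<in>UNIV. E u v}. card S = Suc (r - 2) + 1 \<longrightarrow> \<not> clq E S"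
    proof (intro allI impI notI)
      fix S assume S: "S \<subseteq> {v\<in>UNIV. E u v}" "card S = Suc (r - 2) + 1" "clq E S"
      have uS: "u \<notin> S" using S(1) sg by (auto simp: simple_graph_def)
      have "card (insert u S) = r + 1" using uS S(2) assms(2) by simp
      moreover have "clq E (insert u S)" using S(1,3) sg unfolding clq_def simple_graph_def by auto
      ultimately have "contains_clique E (r + 1)" unfolding contains_clique_def clq_def
        by (intro exI[of _ "insert u S"]) auto
      then show False using assms(3) by simp
    qed
    have "real (Suc (r - 2)) * TT E u \<le> real (r - 2) * (dg E u)^2"
      using turan[OF sg hyp] unfolding sub_T card_sub TT_def dg_def .
    moreover have "real (Suc (r - 2)) = real r - 1" "real (r - 2) = real r - 2"
      using assms(2) by (simp_all add: of_nat_diff)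
    ultimately show ?thesis by simp
  qed
  have sumqf: "(\<Sum>u\<in>UNIV. qf u) = Q - ST"
  proof -
    have "(\<Sum>u\<in>UNIV. qf u) = (\<Sum>u\<in>UNIV. \<Sum>a\<in>UNIV. ind E u a * dg E a) - ST"
      unfolding qf_def qf_xv[OF sg] ST_def by (simp add: sum_subtractf)
    also have "(\<Sum>u\<in>UNIV. \<Sum>a\<in>UNIV. ind E u a * dg E a) = Q"
      unfolding dg_def Q_def by (rule sum_deg_sq[OF sg])
    finally show ?thesis .
  qed
  have sumnx: "(\<Sum>u\<in>UNIV. nx u) = D - Q / n"
    unfolding nx_def xv_norm D_def Q_def n_def by (simp add: sum_subtractf sum_divide_distrib)
  have A: "Q - ST \<le> R * (D - Q / n)"
  proof -
    have "(\<Sum>u\<in>UNIV. qf u) \<le> (\<Sum>u\<in>UNIV. R * nx u)" by (intro sum_mono ray)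
    also have "(\<Sum>u\<in>UNIV. R * nx u) = R * (D - Q / n)" using sumnx by (simp add: sum_distrib_left[symmetric])
    finally show ?thesis using sumqf by simp
  qed
  have B: "(real r - 1) * ST \<le> (real r - 2) * Q"
    unfolding ST_def Q_def sum_distrib_left by (intro sum_mono tur)
  define X where "X = (real r - 1) * R"
  have C: "Q * n \<le> X * (D * n - Q)"
  proof -
    define P where "P = R * (D - Q / n)"
    have "(real r - 1) * (Q - ST) \<le> (real r - 1) * P"
      using A r1 unfolding P_def by (intro mult_left_mono) auto
    then have "Q \<le> (real r - 1) * P" using B by (simp add: algebra_simps)
    then have "Q \<le> X * (D - Q / n)" unfolding X_def P_def by (simp add: mult.assoc)
    then have "Q * n \<le> X * (D - Q / n) * n" using n0 by (simp add: mult_right_mono)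
    also have "X * (D - Q / n) * n = X * (D * n - Q)" using n0 by (simp add: field_simps)
    finally show ?thesis .
  qed
  have Q0: "Q \<ge> 0" unfolding Q_def by (intro sum_nonneg) auto
  have X0: "X \<ge> 0"
  proof (rule ccontr)
    assume "\<not> X \<ge> 0"
    then have "X * (D * n - Q) < 0" using QnD by (simp add: mult_neg_pos algebra_simps)
    then show False using C Q0 n0 by (smt (verit) mult_nonneg_nonneg)
  qed
  have C2: "Q * (n + X) \<le> X * D * n" using C by (simp add: algebra_simps)
  have C3: "D^2 * (n + X) \<le> n * (Q * (n + X))"
    using cs X0 n0 by (simp add: mult_right_mono mult.assoc[symmetric])
  have C4: "n * (Q * (n + X)) \<le> n * (X * D * n)" using C2 n0 by simp
  have key: "D * n \<le> X * (n^2 - D)"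
  proof -
    have "D * (D * (n + X)) \<le> D * (X * n^2)"
      using C3 C4 by (simp add: power2_eq_square algebra_simps)
    then have "D * (n + X) \<le> X * n^2" using D0 by simp
    then show ?thesis by (simp add: algebra_simps)
  qed
  define bnd where "bnd = D * n / ((real r - 1) * (n^2 - D))"
  have den: "(real r - 1) * (n^2 - D) > 0" using r1 Dn2 by simp
  have part1: "bnd \<le> R"
    unfolding bnd_def using key den unfolding X_def by (simp add: divide_le_eq algebra_simps)
  have bnd_eq: "2 * real (card (edges E)) * real CARD('n) /
             ((real r - 1) * (real CARD('n) ^ 2 - 2 * real (card (edges E)))) = bnd"
    unfolding bnd_def D2m m_def n_def ..
  have Rle: "R \<le> n" unfolding R_def n_def by (rule lam_le_n[OF sg])
  have part2: "R = bnd \<longleftrightarrow> regular_complete_multipartite E r"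
  proof
    assume Rb: "R = bnd"
    have XE: "X * (n^2 - D) = D * n"
      using Rb den unfolding bnd_def X_def by (simp add: field_simps)
    have npX: "n + X > 0" using n0 X0 by simp
    have Xn2: "X * n^2 = D * (n + X)" using XE by (simp add: algebra_simps)
    have E1: "D^2 * (n + X) = n * (Q * (n + X))"
    proof -
      have "n * (X * D * n) = D * (X * n^2)" by (simp add: power2_eq_square algebra_simps)
      also have "\<dots> = D^2 * (n + X)" using Xn2 by (simp add: power2_eq_square algebra_simps)
      finally show ?thesis using C3 C4 by linarith
    qed
    have nQ: "n * Q = D^2"
    proof -
      have "(n * Q) * (n + X) = D^2 * (n + X)" using E1 by (simp add: algebra_simps)
      then show ?thesis using npX by simp
    qed
    have QX: "Q * (n + X) = X * D * n"
    proof -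
      have "n * (Q * (n + X)) = n * (X * D * n)"
        using E1 Xn2 by (simp add: power2_eq_square algebra_simps)
      then show ?thesis using n0 by simp
    qed
    define P where "P = R * (D - Q / n)"
    have PQ: "(real r - 1) * P = Q"
    proof -
      have "(real r - 1) * P = X * (D - Q / n)" unfolding X_def P_def by simp
      also have "\<dots> = (X * D * n - X * Q) / n" using n0 by (simp add: field_simps)
      also have "\<dots> = Q" using QX n0 by (simp add: field_simps)
      finally show ?thesis .
    qed
    have slack0: "P - (Q - ST) \<le> 0"
    proof -
      have "(real r - 1) * (P - (Q - ST)) \<le> 0" using PQ B by (simp add: algebra_simps)
      then show ?thesis using r1 by (simp add: mult_le_0_iff)
    qed
    have sl: "(\<Sum>u\<in>UNIV. R * nx u - qf u) = P - (Q - ST)"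
      unfolding sum_subtractf sumqf sum_distrib_left[symmetric] sumnx P_def ..
    have "\<forall>u\<in>UNIV. R * nx u - qf u = 0"
    proof (rule sum_nonneg_eq_0_iff[THEN iffD1])
      show "finite (UNIV::'n set)" by simp
      show "\<And>u. u \<in> UNIV \<Longrightarrow> 0 \<le> R * nx u - qf u" using ray by simp
      have "(\<Sum>u\<in>UNIV. R * nx u - qf u) \<ge> 0" using ray by (intro sum_nonneg) simp
      then show "(\<Sum>u\<in>UNIV. R * nx u - qf u) = 0" using sl slack0 by linarith
    qed
    then have eig: "laplacian E *v xv E u = R *\<^sub>R xv E u" for u
      using lam_props(2)[OF sg] unfolding qf_def nx_def R_def by simp
    have comp: "ind E u w * dg E w - (\<Sum>v\<in>UNIV. ind E w v * ind E u v) = R * (ind E u w - dg E u / n)" for u w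
      using arg_cong[OF eig[of u], of "\<lambda>y. y $ w"] unfolding lap_xv by (simp add: xv_def n_def)
    have reg: "dg E u = D / n" for u
    proof -
      define c where "c = D / n"
      have "(\<Sum>u\<in>UNIV. (dg E u - c)^2) = (\<Sum>u\<in>UNIV. (dg E u)^2 - 2 * c * dg E u + c^2)"
        by (intro sum.cong refl) (simp add: power2_eq_square algebra_simps)
      also have "\<dots> = Q - 2 * c * D + n * c^2"
        unfolding Q_def D_def n_def by (simp add: sum.distrib sum_subtractf sum_distrib_left)
      finally have "(\<Sum>u\<in>UNIV. (dg E u - D / n)^2) = Q - 2 * (D / n) * D + n * (D / n)^2"
        unfolding c_def .
      also have "\<dots> = 0" using nQ n0 by (simp add: field_simps power2_eq_square)
      finally have "\<forall>u\<in>UNIV. (dg E u - D / n)^2 = 0"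
        by (subst sum_nonneg_eq_0_iff[symmetric]) auto
      then show ?thesis by simp
    qed
    have dpos: "D / n > 0" using D0 n0 by simp
    have irr: "ind E u u = 0" for u using sg by (simp add: ind_def simple_graph_def)
    have self: "(\<Sum>v\<in>UNIV. ind E u v * ind E u v) = dg E u" for u by (simp add: dg_def)
    have Rn: "R = n"
    proof -
      obtain u :: 'n where True by simp
      have "- dg E u = R * (- dg E u / n)" using comp[of u u] irr[of u] self[of u] by simp
      then have "dg E u * n = R * dg E u" using n0 by (simp add: field_simps)
      moreover have "dg E u > 0" using reg[of u] dpos by simp
      ultimately show ?thesis by (metis mult.commute mult_cancel_left less_irrefl)
    qed
    have nb: "E w v" if nuw: "\<not> E u w" and uv: "E u v" for u w v
    proof -
      have "ind E u w = 0" using nuw by (simp add: ind_def)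
      then have "(\<Sum>v\<in>UNIV. ind E w v * ind E u v) = dg E u"
        using comp[of u w] Rn n0 by simp
      then have "(\<Sum>v\<in>UNIV. ind E u v * (1 - ind E w v)) = 0"
        by (simp add: dg_def right_diff_distrib sum_subtractf mult.commute)
      then have "\<forall>v\<in>UNIV. ind E u v * (1 - ind E w v) = 0"
        by (subst sum_nonneg_eq_0_iff[symmetric]) auto
      then have "ind E u v * (1 - ind E w v) = 0" by simp
      then show ?thesis using uv by (simp add: ind_def split: if_splits)
    qed
    have rn: "real r * (n - D / n) = n"
    proof -
      have "(real r - 1) * n * (n^2 - D) = D * n" using XE Rn unfolding X_def by simp
      then have "n * ((real r - 1) * (n^2 - D)) = n * D" by (simp add: algebra_simps)
      then have "(real r - 1) * (n^2 - D) = D" using n0 by simp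
      then have "real r * (n^2 - D) = n^2" by (simp add: algebra_simps)
      then show ?thesis using n0 by (simp add: field_simps power2_eq_square)
    qed
    have cc: "real (card {w. \<not> E u w}) = real CARD('n) / real r" for u
    proof -
      have "real (card {w. \<not> E u w}) = n - dg E u" unfolding card_compl_real dg_card n_def ..
      also have "\<dots> = n / real r" using reg[of u] rn r1 by (simp add: field_simps)
      finally show ?thesis unfolding n_def .
    qed
    show "regular_complete_multipartite E r"
    proof (rule build_f[OF sg nb cc])
      show "0 < r" using assms(2) by simp
    qed
  next
    assume rcm: "regular_complete_multipartite E r"
    then obtain f :: "'n \<Rightarrow> nat" where f: "\<And>v. f v < r" "\<And>u v. E u v \<longleftrightarrow> f u \<noteq> f v"
      "\<And>i. i < r \<Longrightarrow> real (card {v. f v = i}) = n / real r"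
      unfolding regular_complete_multipartite_def n_def by blast
    have dgu: "dg E u = n - n / real r" for u
    proof -
      have "dg E u = real (card {v. \<not> (f v = f u)})" unfolding dg_card using f(2) by metis
      also have "\<dots> = n - n / real r" using card_compl_real f(1,3) unfolding n_def by metis
      finally show ?thesis .
    qed
    have "D = n * (n - n / real r)" unfolding D_def dgu n_def by simp
    then have "bnd = n" unfolding bnd_def using n0 r1 assms(2) D0
      by (simp add: field_simps power2_eq_square)
    then show "R = bnd" using part1 Rle by simp
  qed
  show ?thesis using part1 part2 bnd_eq R_def by simp
qed

end
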